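(* Let $V_k=\gamma/k^\alpha$. (i) Let $m\ge1$, $n=2m$, and let $\mathcal{S}_m\subset\mathcal{S}_n\subset\mathcal{T}$ be nested subsets of sizes $m,n$ with regularized risks $R_m,R_n$ and minimizers $\mathbf{w}_m^*,\mathbf{w}_n^*$. Let $\mathbf{w}_m$ satisfy $\mathbb{E}[R_m(\mathbf{w}_m)-R_m(\mathbf{w}_m^* )]\le V_m$. Run accelerated gradient descent on $R_n$: $\tilde{\mathbf{w}}_0=\tilde{\mathbf{y}}_0=\mathbf{w}_m$ and $$\tilde{\mathbf{w}}_{k+1}=\tilde{\mathbf{y}}_k-\eta_n\nabla R_n(\tilde{\mathbf{y}}_k),\qquad \tilde{\mathbf{y}}_{k+1}=\tilde{\mathbf{w}}_{k+1}+\beta_n(\tilde{\mathbf{w}}_{k+1}-\tilde{\mathbf{w}}_k),$$ with $\eta_n=\frac{1}{cV_n+M}$ and $\beta_n=\frac{\sqrt{cV_n+M}-\sqrt{cV_n}}{\sqrt{cV_n+M}+\sqrt{cV_n}}$, and set $\mathbf{w}_n=\tilde{\mathbf{w}}_{s_n}$. If $$s_n\ge\sqrt{\frac{n^\alpha M+c\gamma}{c\gamma}}\,\log\left[6\cdot2^\alpha+(2^\alpha-1)\left(4+c\|\mathbf{w}^*\|^2\right)\right],$$ then $\mathbb{E}[R_n(\mathbf{w}_n)-R_n(\mathbf{w}_n^* )]\le V_n$. (ii) Moreover, suppose $N=2^q m_0$ for an integer $q\ge0$ and the sample sizes $n\in\{m_0,2m_0,\dots,N\}$ are used in turn (each stage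 initialized at the output of the previous one), with $s_n$ equal to the right-hand side of the bound in (i) at each stage, and where one AGD iteration on $R_n$ is counted as $n$ component-gradient evaluations. Then the total number of gradient evaluations $\sum_{n\in\{m_0,2m_0,\dots,N\}} n\,s_n$ is at most $$N\left[1+\log_2\!\left(\frac{N}{m_0}\right)+\frac{\sqrt{2^\alpha}}{\sqrt{2^\alpha}-1}\sqrt{\frac{N^\alpha M}{c\gamma}}\right]\log\left[6\cdot2^\alpha+(2^\alpha-1)\left(4+c\|\mathbf{w}^*\|^2\right)\right].$$
   Context: Let $Z$ be a random variable with distribution $P$ on a space $\mathcal{Z}$ and $f:\mathbb{R}^p\times\mathcal{Z}\to\mathbb{R}$ a loss function. The expected loss is $L(\mathbf{w})=\mathbb{E}_Z[f(\mathbf{w},Z)]$ and $\mathbf{w}^*$ denotes a minimizer of $L$. The training set $\mathcal{T}=\{z_1,\dots,z_N\}$ consists of $N$ independent samples from $P$. For a (fixed, data-independent) subset $\mathcal{S}\subseteq\mathcal{T}$ with $k$ elements, the empirical loss is $L_{\mathcal{S}}(\mathbf{w})=\frac1k\sum_{z\in\mathcal{S}}f(\mathbf{w},z)$; for the sets $\mathcal{S}_k$ we write $L_k=L_{\mathcal{S}_k}$. Statistical accuracy: $V_k=\gamma/k^\alpha$ with constants $\gamma>0$, $\alpha\in[0.5,1]$, and for every $k$ and every set $\mathcal{S}$ of $k$ independent samples from $P$, $\mathbb{E}[\sup_{\mathbf{w}}|L(\mathbf{w})-L_{\mathcal{S}}(\mathbf{w})|]\le V_k$. For a constant $c>0$,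 $R_k(\mathbf{w})=L_k(\mathbf{w})+\frac{cV_k}{2}\|\mathbf{w}\|^2$ with minimizer $\mathbf{w}_k^*$; thus $\nabla R_n(\mathbf{w})=\frac1n\sum_{z\in\mathcal{S}_n}\nabla f(\mathbf{w},z)+cV_n\mathbf{w}$. Assumption: for every $z$, $f(\cdot,z)$ is convex with $M$-Lipschitz continuous gradient ($M>0$). Expectations are over the training samples. *)

theory Defs
  imports "HOL-Probability.Probability"
begin

definition Vstat :: "real \<Rightarrow> real \<Rightarrow> nat \<Rightarrow> real" where
  "Vstat \<gamma> \<alpha> k = \<gamma> / (real k powr \<alpha>)"

definition pop_loss :: "'z measure \<Rightarrow> ('a \<Rightarrow> 'z \<Rightarrow> real) \<Rightarrow> 'a \<Rightarrow> real" where
  "pop_loss P f w = (\<integral>z. f w z \<partial>P)"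

definition emp_loss :: "('a \<Rightarrow> 'z \<Rightarrow> real) \<Rightarrow> (nat \<Rightarrow> 'o \<Rightarrow> 'z) \<Rightarrow> nat set \<Rightarrow> 'a \<Rightarrow> 'o \<Rightarrow> real" where
  "emp_loss f X S w \<omega> = (\<Sum>i\<in>S. f w (X i \<omega>)) / real (card S)"

definition reg_risk :: "('a::real_normed_vector \<Rightarrow> 'z \<Rightarrow> real) \<Rightarrow> (nat \<Rightarrow> 'o \<Rightarrow> 'z) \<Rightarrow> real \<Rightarrow> real \<Rightarrow> real
    \<Rightarrow> nat set \<Rightarrow> 'a \<Rightarrow> 'o \<Rightarrow> real" where
  "reg_risk f X c \<gamma> \<alpha> S w \<omega> = emp_loss f X S w \<omega> + c * Vstat \<gamma> \<alpha> (card S) / 2 * (norm w)\<^sup>2"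

definition reg_grad :: "('a::real_normed_vector \<Rightarrow> 'z \<Rightarrow> 'a) \<Rightarrow> (nat \<Rightarrow> 'o \<Rightarrow> 'z) \<Rightarrow> real \<Rightarrow> real \<Rightarrow> real
    \<Rightarrow> nat set \<Rightarrow> 'a \<Rightarrow> 'o \<Rightarrow> 'a" where
  "reg_grad G X c \<gamma> \<alpha> S w \<omega> =
     (1 / real (card S)) *\<^sub>R (\<Sum>i\<in>S. G w (X i \<omega>)) + (c * Vstat \<gamma> \<alpha> (card S)) *\<^sub>R w"

fun agd :: "('a::real_vector \<Rightarrow> 'a) \<Rightarrow> real \<Rightarrow> real \<Rightarrow> 'a \<Rightarrow> nat \<Rightarrow> 'a \<times> 'a" where
  "agd g \<eta> \<beta> w0 0 = (w0, w0)"
| "agd g \<eta> \<beta> w0 (Suc k) =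
     (let (w, y) = agd g \<eta> \<beta> w0 k; w' = y - \<eta> *\<^sub>R g y in (w', w' + \<beta> *\<^sub>R (w' - w)))"

definition agd_eta :: "real \<Rightarrow> real \<Rightarrow> real \<Rightarrow> real \<Rightarrow> nat \<Rightarrow> real" where
  "agd_eta c \<gamma> \<alpha> M n = 1 / (c * Vstat \<gamma> \<alpha> n + M)"

definition agd_beta :: "real \<Rightarrow> real \<Rightarrow> real \<Rightarrow> real \<Rightarrow> nat \<Rightarrow> real" where
  "agd_beta c \<gamma> \<alpha> M n =
     (sqrt (c * Vstat \<gamma> \<alpha> n + M) - sqrt (c * Vstat \<gamma> \<alpha> n)) /
     (sqrt (c * Vstat \<gamma> \<alpha> n + M) + sqrt (c * Vstat \<gamma> \<alpha> n))"

definition log_factor :: "real \<Rightarrow> real \<Rightarrow> 'a::real_normed_vector \<Rightarrow> real" where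
  "log_factor \<alpha> c wstar = ln (6 * 2 powr \<alpha> + (2 powr \<alpha> - 1) * (4 + c * (norm wstar)\<^sup>2))"

definition iter_bound :: "real \<Rightarrow> real \<Rightarrow> real \<Rightarrow> real \<Rightarrow> 'a::real_normed_vector \<Rightarrow> nat \<Rightarrow> real" where
  "iter_bound \<alpha> c \<gamma> M wstar n =
     sqrt ((real n powr \<alpha> * M + c * \<gamma>) / (c * \<gamma>)) * log_factor \<alpha> c wstar"

end

theory Submission
  imports Defs
begin

lemma line_deriv:
  fixes h :: "'a::real_inner \<Rightarrow> real"
  assumes "\<And>w. GDERIV h w :> Gh w"
  shows "((\<lambda>t. h (y + t *\<^sub>R d)) has_real_derivative (d \<bullet> Gh (y + t *\<^sub>R d))) (at t)"
proof -
  have 1: "((\<lambda>t. y + t *\<^sub>R d) has_derivative (\<lambda>s. s *\<^sub>R d)) (at t)"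
    by (auto intro!: derivative_eq_intros)
  have 2: "(h has_derivative (\<lambda>v. v \<bullet> Gh (y + t *\<^sub>R d))) (at (y + t *\<^sub>R d))"
    using assms[of "y + t *\<^sub>R d"] by (simp add: gderiv_def)
  have "((\<lambda>t. h (y + t *\<^sub>R d)) has_derivative (\<lambda>s. (s *\<^sub>R d) \<bullet> Gh (y + t *\<^sub>R d))) (at t)"
    using has_derivative_compose[OF 1 2] by (simp add: o_def)
  moreover have "(\<lambda>s. s * (d \<bullet> Gh (y + t *\<^sub>R d))) = (*) (d \<bullet> Gh (y + t *\<^sub>R d))"
    by (auto simp: fun_eq_iff)
  ultimately show ?thesis
    by (simp add: has_field_derivative_def)
qed

lemma upper_quad:
  fixes h :: "'a::real_inner \<Rightarrow> real"
  assumes g: "\<And>w. GDERIV h w :> Gh w"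
    and lip: "\<And>w v. norm (Gh w - Gh v) \<le> M * norm (w - v)"
  shows "h u \<le> h y + Gh y \<bullet> (u - y) + M / 2 * (norm (u - y))\<^sup>2"
proof -
  define d where "d = u - y"
  define \<psi> where "\<psi> t = h (y + t *\<^sub>R d) - t * (Gh y \<bullet> d) - M / 2 * t\<^sup>2 * (norm d)\<^sup>2" for t
  have D: "(\<psi> has_real_derivative (d \<bullet> Gh (y + t *\<^sub>R d) - Gh y \<bullet> d - M * t * (norm d)\<^sup>2)) (at t)" for t
    unfolding \<psi>_def
    by (auto intro!: derivative_eq_intros line_deriv[OF g] simp: power2_eq_square)
  have neg: "d \<bullet> Gh (y + t *\<^sub>R d) - Gh y \<bullet> d - M * t * (norm d)\<^sup>2 \<le> 0" if "0 \<le> t" for t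
  proof -
    have "d \<bullet> Gh (y + t *\<^sub>R d) - Gh y \<bullet> d = d \<bullet> (Gh (y + t *\<^sub>R d) - Gh y)"
      by (simp add: inner_diff_right inner_commute)
    also have "\<dots> \<le> norm d * norm (Gh (y + t *\<^sub>R d) - Gh y)"
      using norm_cauchy_schwarz by blast
    also have "\<dots> \<le> norm d * (M * norm (t *\<^sub>R d))"
      using lip[of "y + t *\<^sub>R d" y] by (intro mult_left_mono) auto
    also have "\<dots> = M * t * (norm d)\<^sup>2"
      using that by (simp add: power2_eq_square)
    finally show ?thesis by simp
  qed
  have "\<psi> 1 \<le> \<psi> 0"
  proof (rule DERIV_nonpos_imp_nonincreasing[of 0 1 \<psi>])
    fix x :: real assume "0 \<le> x" "x \<le> 1"
    then show "\<exists>y. DERIV \<psi> x :> y \<and> y \<le> 0" using D[of x] neg[of x] by blast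
  qed simp
  then show ?thesis unfolding \<psi>_def d_def by (simp add: inner_commute)
qed

lemma lower_lin:
  fixes h :: "'a::real_inner \<Rightarrow> real"
  assumes g: "\<And>w. GDERIV h w :> Gh w"
    and cv: "convex_on UNIV h"
  shows "h y + Gh y \<bullet> (u - y) \<le> h u"
proof -
  define d where "d = u - y"
  have c1: "convex_on UNIV (\<lambda>t::real. h (y + t *\<^sub>R d))"
  proof (rule convex_onI)
    fix a s t :: real
    assume "0 < a" "a < 1"
    have "y + ((1 - a) *\<^sub>R s + a *\<^sub>R t) *\<^sub>R d = (1 - a) *\<^sub>R (y + s *\<^sub>R d) + a *\<^sub>R (y + t *\<^sub>R d)"
      by (simp add: algebra_simps)
    then show "h (y + ((1 - a) *\<^sub>R s + a *\<^sub>R t) *\<^sub>R d) \<le> (1 - a) * h (y + s *\<^sub>R d) + a * h (y + t *\<^sub>R d)"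
      using convex_onD[OF cv, of a "y + s *\<^sub>R d" "y + t *\<^sub>R d"] \<open>0 < a\<close> \<open>a < 1\<close> by auto
  qed simp
  have d0: "((\<lambda>t. h (y + t *\<^sub>R d)) has_real_derivative (d \<bullet> Gh y)) (at 0)"
    using line_deriv[OF g, of y d 0] by simp
  have "(\<lambda>t. h (y + t *\<^sub>R d)) 1 - (\<lambda>t. h (y + t *\<^sub>R d)) 0 \<ge> (d \<bullet> Gh y) * (1 - 0)"
    by (rule convex_on_imp_above_tangent[OF c1]) (auto intro: d0 has_field_derivative_at_within)
  then show ?thesis unfolding d_def by (simp add: inner_commute)
qed

lemma key_scalar:
  fixes t L Rx1 Ry Rs Rx aa bb gg ab ag bg :: real
  assumes t: "0 < t" "t \<le> 1" and L: "0 < L"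
    and I1: "Rx1 \<le> Ry - gg / (2 * L)"
    and I2: "Ry - bg + t\<^sup>2 * L / 2 * bb \<le> Rs"
    and I3: "Ry + t * (bg - ag) \<le> Rx"
    and nn: "0 \<le> aa - 2 * ab + bb"
  shows "Rx1 - Rs + t\<^sup>2 * L / 2 * ((1 - t)\<^sup>2 * aa + t\<^sup>2 * bb + 2 * (1 - t) * t * ab)
           + gg / (2 * L) - (1 - t) * t * ag - t\<^sup>2 * bg
         \<le> (1 - t) * (Rx - Rs + t\<^sup>2 * L / 2 * aa)"
proof -
  have eq: "Rx1 - Rs + t\<^sup>2 * L / 2 * ((1 - t)\<^sup>2 * aa + t\<^sup>2 * bb + 2 * (1 - t) * t * ab)
           + gg / (2 * L) - (1 - t) * t * ag - t\<^sup>2 * bg - (1 - t) * (Rx - Rs + t\<^sup>2 * L / 2 * aa)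
        = (Rx1 - Ry + gg / (2 * L)) + t * (Ry - bg + t\<^sup>2 * L / 2 * bb - Rs)
          + (1 - t) * (Ry + t * (bg - ag) - Rx) - t\<^sup>2 * L / 2 * t * (1 - t) * (aa - 2 * ab + bb)"
    by (simp add: field_simps power2_eq_square)
  have "t * (Ry - bg + t\<^sup>2 * L / 2 * bb - Rs) \<le> 0"
    using I2 t by (intro mult_nonneg_nonpos) auto
  moreover have "(1 - t) * (Ry + t * (bg - ag) - Rx) \<le> 0"
    using I3 t by (intro mult_nonneg_nonpos) auto
  moreover have "0 \<le> t\<^sup>2 * L / 2 * t * (1 - t) * (aa - 2 * ab + bb)"
    using t L nn by (intro mult_nonneg_nonneg) auto
  ultimately show ?thesis using eq I1 by linarith
qed

lemma key_vector:
  fixes R :: "'a::real_inner \<Rightarrow> real" and g :: "'a \<Rightarrow> 'a"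
  assumes t: "0 < t" "t \<le> 1" and L: "0 < L"
    and up: "\<And>u y. R u \<le> R y + g y \<bullet> (u - y) + L / 2 * (norm (u - y))\<^sup>2"
    and low: "\<And>u y. R y + g y \<bullet> (u - y) + t\<^sup>2 * L / 2 * (norm (u - y))\<^sup>2 \<le> R u"
    and x1: "x1 = y - (1 / L) *\<^sub>R g y"
    and y1: "y1 = x1 + ((1 - t) / (1 + t)) *\<^sub>R (x1 - x)"
  shows "R x1 - R xs + t\<^sup>2 * L / 2 * (norm ((1 / t) *\<^sub>R ((1 + t) *\<^sub>R y1 - x1) - xs))\<^sup>2
       \<le> (1 - t) * (R x - R xs + t\<^sup>2 * L / 2 * (norm ((1 / t) *\<^sub>R ((1 + t) *\<^sub>R y - x) - xs))\<^sup>2)"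
proof -
  define z where "z = (1 / t) *\<^sub>R ((1 + t) *\<^sub>R y - x)"
  define a where "a = z - xs"
  define b where "b = y - xs"
  define gy where "gy = g y"
  have xz: "x = (1 + t) *\<^sub>R y - t *\<^sub>R z"
    using t unfolding z_def by (simp add: algebra_simps)
  have xy: "x - y = t *\<^sub>R (b - a)"
    unfolding a_def b_def xz by (simp add: algebra_simps)
  have bt: "(1 + t) * ((1 - t) / (1 + t)) = 1 - t" using t by simp
  have "(1 + t) *\<^sub>R y1 - x1 = t *\<^sub>R x1 + ((1 + t) * ((1 - t) / (1 + t))) *\<^sub>R (x1 - x)"
    unfolding y1 by (simp add: algebra_simps)
  also have "\<dots> = x1 - (1 - t) *\<^sub>R x"
    unfolding bt by (simp add: algebra_simps)
  finally have yy: "(1 + t) *\<^sub>R y1 - x1 = x1 - (1 - t) *\<^sub>R x" .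
  have z1: "(1 / t) *\<^sub>R ((1 + t) *\<^sub>R y1 - x1) - xs = (1 - t) *\<^sub>R a + t *\<^sub>R b - (1 / (t * L)) *\<^sub>R gy"
  proof -
    have "t *\<^sub>R ((1 / t) *\<^sub>R ((1 + t) *\<^sub>R y1 - x1) - xs) = x1 - (1 - t) *\<^sub>R x - t *\<^sub>R xs"
      using t yy by (simp add: algebra_simps)
    also have "\<dots> = t *\<^sub>R ((1 - t) *\<^sub>R a + t *\<^sub>R b - (1 / (t * L)) *\<^sub>R gy)"
      unfolding x1 xz a_def b_def gy_def using t L by (simp add: algebra_simps)
    finally show ?thesis using t by simp
  qed
  have nsq: "\<And>v::'a. norm v * norm v = v \<bullet> v" by (metis power2_eq_square power2_norm_eq_inner)
  have I1: "R x1 \<le> R y - (gy \<bullet> gy) / (2 * L)"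
  proof -
    have "R x1 \<le> R y + gy \<bullet> (x1 - y) + L / 2 * (norm (x1 - y))\<^sup>2" using up unfolding gy_def by blast
    also have "\<dots> = R y - (gy \<bullet> gy) / (2 * L)"
      unfolding x1 gy_def using L by (simp add: power2_eq_square field_simps nsq)
    finally show ?thesis .
  qed
  have I2: "R y - b \<bullet> gy + t\<^sup>2 * L / 2 * (b \<bullet> b) \<le> R xs"
    using low[of y xs] unfolding gy_def b_def by (simp add: power2_norm_eq_inner inner_diff_right inner_commute norm_minus_commute) (simp add: algebra_simps)
  have I3: "R y + t * (b \<bullet> gy - a \<bullet> gy) \<le> R x"
  proof -
    have "R y + gy \<bullet> (x - y) + t\<^sup>2 * L / 2 * (norm (x - y))\<^sup>2 \<le> R x" using low unfolding gy_def by blast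
    moreover have "0 \<le> t\<^sup>2 * L / 2 * (norm (x - y))\<^sup>2" using L by simp
    ultimately show ?thesis unfolding xy by (simp add: inner_diff_right inner_commute)
  qed
  have nn: "0 \<le> a \<bullet> a - 2 * (a \<bullet> b) + b \<bullet> b"
  proof -
    have "0 \<le> (a - b) \<bullet> (a - b)" by simp
    then show ?thesis by (simp add: inner_diff_left inner_diff_right inner_commute)
  qed
  have nexp: "\<And>p q c. (norm (p *\<^sub>R a + q *\<^sub>R b - c *\<^sub>R gy))\<^sup>2
      = p\<^sup>2 * (a \<bullet> a) + q\<^sup>2 * (b \<bullet> b) + c\<^sup>2 * (gy \<bullet> gy) + 2 * p * q * (a \<bullet> b)
        - 2 * p * c * (a \<bullet> gy) - 2 * q * c * (b \<bullet> gy)"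
    unfolding power2_norm_eq_inner
    by (simp add: inner_add_left inner_add_right inner_diff_left inner_diff_right
        inner_commute algebra_simps power2_eq_square)
  have nz1: "t\<^sup>2 * L / 2 * (norm ((1 - t) *\<^sub>R a + t *\<^sub>R b - (1 / (t * L)) *\<^sub>R gy))\<^sup>2
     = t\<^sup>2 * L / 2 * ((1 - t)\<^sup>2 * (a \<bullet> a) + t\<^sup>2 * (b \<bullet> b) + 2 * (1 - t) * t * (a \<bullet> b))
           + (gy \<bullet> gy) / (2 * L) - (1 - t) * t * (a \<bullet> gy) - t\<^sup>2 * (b \<bullet> gy)"
    unfolding nexp using t L by (simp add: field_simps power2_eq_square)
  have nz0: "(norm ((1 / t) *\<^sub>R ((1 + t) *\<^sub>R y - x) - xs))\<^sup>2 = a \<bullet> a"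
    unfolding a_def z_def by (simp add: power2_norm_eq_inner)
  show ?thesis
    unfolding z1 nz0 nz1
    using key_scalar[OF t L I1 I2 I3 nn] by linarith
qed



lemma agd_Suc_fst: "fst (agd g \<eta> \<beta> w0 (Suc k)) = snd (agd g \<eta> \<beta> w0 k) - \<eta> *\<^sub>R g (snd (agd g \<eta> \<beta> w0 k))"
  by (simp add: Let_def split: prod.split)

lemma agd_Suc_snd: "snd (agd g \<eta> \<beta> w0 (Suc k)) = fst (agd g \<eta> \<beta> w0 (Suc k)) + \<beta> *\<^sub>R (fst (agd g \<eta> \<beta> w0 (Suc k)) - fst (agd g \<eta> \<beta> w0 k))"
  by (simp add: Let_def split: prod.split)

lemma norm_self_inner: "norm (v::'a::real_inner) * norm v = v \<bullet> v"
  by (metis power2_eq_square power2_norm_eq_inner)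

lemma agd_conv:
  fixes R :: "'a::real_inner \<Rightarrow> real" and g :: "'a \<Rightarrow> 'a"
  assumes mu: "0 < \<mu>" "\<mu> \<le> L"
    and up: "\<And>u y. R u \<le> R y + g y \<bullet> (u - y) + L / 2 * (norm (u - y))\<^sup>2"
    and low: "\<And>u y. R y + g y \<bullet> (u - y) + \<mu> / 2 * (norm (u - y))\<^sup>2 \<le> R u"
    and min: "\<And>u. R xs \<le> R u"
  shows "R (fst (agd g (1 / L) ((sqrt L - sqrt \<mu>) / (sqrt L + sqrt \<mu>)) x0 k)) - R xs
         \<le> 2 * (1 - sqrt \<mu> / sqrt L) ^ k * (R x0 - R xs)"
proof -
  define t where "t = sqrt \<mu> / sqrt L"
  have L: "0 < L" using mu by simp
  have t: "0 < t" "t \<le> 1" unfolding t_def using mu L by (auto simp: real_sqrt_le_iff)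
  have tL: "t\<^sup>2 * L = \<mu>" unfolding t_def using mu L by (simp add: power_divide)
  have sL: "0 < sqrt L" using L by simp
  have n1: "(1 - t) * sqrt L = sqrt L - sqrt \<mu>" "(1 + t) * sqrt L = sqrt L + sqrt \<mu>"
    unfolding t_def using sL by (simp_all add: algebra_simps)
  have beta: "(sqrt L - sqrt \<mu>) / (sqrt L + sqrt \<mu>) = (1 - t) / (1 + t)"
    unfolding n1[symmetric] using sL by (rule mult_divide_mult_cancel_right[OF less_imp_neq[symmetric]])
  have low': "\<And>u y. R y + g y \<bullet> (u - y) + t\<^sup>2 * L / 2 * (norm (u - y))\<^sup>2 \<le> R u"
    using low tL by simp
  define p where "p k = agd g (1 / L) ((1 - t) / (1 + t)) x0 k" for k
  define \<Phi> where "\<Phi> k = R (fst (p k)) - R xs + t\<^sup>2 * L / 2 * (norm ((1 / t) *\<^sub>R ((1 + t) *\<^sub>R snd (p k) - fst (p k)) - xs))\<^sup>2" for k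
  have step: "\<Phi> (Suc k) \<le> (1 - t) * \<Phi> k" for k
    unfolding \<Phi>_def
    by (rule key_vector[OF t L up low']) (simp only: p_def agd_Suc_fst, simp only: p_def agd_Suc_snd)
  have iter: "\<Phi> k \<le> (1 - t) ^ k * \<Phi> 0" for k
  proof (induction k)
    case 0 then show ?case by simp
  next
    case (Suc k)
    have "\<Phi> (Suc k) \<le> (1 - t) * \<Phi> k" by (rule step)
    also have "\<dots> \<le> (1 - t) * ((1 - t) ^ k * \<Phi> 0)"
      using Suc t by (intro mult_left_mono) auto
    finally show ?case by simp
  qed
  have g0: "g xs = 0"
  proof -
    have "R (xs - (1 / L) *\<^sub>R g xs) \<le> R xs + g xs \<bullet> ((xs - (1 / L) *\<^sub>R g xs) - xs) + L / 2 * (norm ((xs - (1 / L) *\<^sub>R g xs) - xs))\<^sup>2"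
      by (rule up)
    also have "\<dots> = R xs - (norm (g xs))\<^sup>2 / (2 * L)"
      using L by (simp add: power_mult_distrib field_simps power2_eq_square norm_self_inner)
    finally have "R xs \<le> R xs - (norm (g xs))\<^sup>2 / (2 * L)" using min[of "xs - (1 / L) *\<^sub>R g xs"] by linarith
    then have "(norm (g xs))\<^sup>2 / (2 * L) \<le> 0" by linarith
    then have "(norm (g xs))\<^sup>2 \<le> 0" using L by (simp add: divide_le_0_iff)
    then show ?thesis by simp
  qed
  have phi0: "\<Phi> 0 \<le> 2 * (R x0 - R xs)"
  proof -
    have e: "(1 / t) *\<^sub>R ((1 + t) *\<^sub>R x0 - x0) = x0" using t by (simp add: algebra_simps)
    have "R xs + g xs \<bullet> (x0 - xs) + \<mu> / 2 * (norm (x0 - xs))\<^sup>2 \<le> R x0" by (rule low)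
    then show ?thesis unfolding \<Phi>_def p_def using tL e g0 by simp
  qed
  have "R (fst (p k)) - R xs \<le> \<Phi> k"
    unfolding \<Phi>_def using L by simp
  also have "\<dots> \<le> (1 - t) ^ k * \<Phi> 0" by (rule iter)
  also have "\<dots> \<le> (1 - t) ^ k * (2 * (R x0 - R xs))"
    using phi0 t by (intro mult_left_mono) auto
  finally show ?thesis unfolding p_def beta t_def by (simp add: algebra_simps)
qed

lemma log_factor_nonneg:
  assumes "0 \<le> \<alpha>" "0 < c"
  shows "0 \<le> log_factor \<alpha> c wstar"
proof -
  have a: "1 \<le> 2 powr \<alpha>" using assms by (intro ge_one_powr_ge_zero) auto
  have "0 \<le> (2 powr \<alpha> - 1) * (4 + c * (norm wstar)\<^sup>2)" using a assms by (intro mult_nonneg_nonneg) auto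
  then have "1 \<le> 6 * 2 powr \<alpha> + (2 powr \<alpha> - 1) * (4 + c * (norm wstar)\<^sup>2)" using a by linarith
  then show ?thesis unfolding log_factor_def by simp
qed

lemma pow2_powr: "real ((2::nat) ^ k) powr \<alpha> = (2 powr \<alpha>) ^ k"
proof -
  have "real ((2::nat) ^ k) = 2 powr (real k)" by (simp add: powr_realpow)
  then have "real ((2::nat) ^ k) powr \<alpha> = 2 powr (real k * \<alpha>)" by (simp add: powr_powr)
  also have "\<dots> = (2 powr \<alpha>) ^ k" by (simp add: powr_power)
  finally show ?thesis .
qed

lemma part_ii:
  fixes M c \<gamma> \<alpha> :: real and wstar :: "'a::real_normed_vector"
  assumes M: "0 < M" and g: "0 < \<gamma>" and c: "0 < c" and a: "1/2 \<le> \<alpha>"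
    and m0: "1 \<le> m0" and N: "N = 2 ^ q * m0"
  shows "(\<Sum>j\<le>q. real (2 ^ j * m0) * iter_bound \<alpha> c \<gamma> M wstar (2 ^ j * m0))
          \<le> real N * (1 + log 2 (real N / real m0)
                + sqrt (2 powr \<alpha>) / (sqrt (2 powr \<alpha>) - 1) * sqrt (real N powr \<alpha> * M / (c * \<gamma>)))
            * log_factor \<alpha> c wstar"
proof -
  define K where "K = c * \<gamma>"
  have K: "0 < K" unfolding K_def using c g by simp
  define LF where "LF = log_factor \<alpha> c wstar"
  have LF: "0 \<le> LF" unfolding LF_def using a c by (intro log_factor_nonneg) auto
  define s where "s = sqrt (2 powr \<alpha>)"
  have s1: "1 < s" unfolding s_def using a by (simp add: real_less_rsqrt)
  define r where "r = 1 / s"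
  have r: "0 < r" "r < 1" unfolding r_def using s1 by auto
  define SN where "SN = sqrt (real N powr \<alpha> * M / K)"
  define n where "n j = 2 ^ j * m0" for j :: nat
  have nN: "real (n j) \<le> real N" if "j \<le> q" for j
  proof -
    have "(2::nat) ^ j \<le> 2 ^ q" using that by (simp add: power_increasing)
    then show ?thesis unfolding n_def N using m0 by (simp del: of_nat_mult)
  qed
  have Nn: "real N = real (2 ^ (q - j)) * real (n j)" if "j \<le> q" for j
  proof -
    have "(2::nat) ^ q = 2 ^ (q - j) * 2 ^ j" using that by (simp flip: power_add)
    then show ?thesis unfolding N n_def by (simp del: of_nat_power)
  qed
  have tm: "real (n j) * iter_bound \<alpha> c \<gamma> M wstar (n j)
      \<le> real N * LF + real N * SN * r ^ (q - j) * LF" if j: "j \<le> q" for j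
  proof -
    define x where "x = real (n j) powr \<alpha> * M / K"
    have x: "0 \<le> x" unfolding x_def using M K by simp
    have xe: "(real (n j) powr \<alpha> * M + c * \<gamma>) / (c * \<gamma>) = x + 1"
      unfolding x_def K_def using c g by (simp add: add_divide_distrib)
    have "iter_bound \<alpha> c \<gamma> M wstar (n j) = sqrt (x + 1) * LF"
      unfolding iter_bound_def LF_def xe ..
    also have "\<dots> \<le> (sqrt x + 1) * LF"
      using sqrt_add_le_add_sqrt[OF x, of 1] LF by (intro mult_right_mono) auto
    finally have ib: "iter_bound \<alpha> c \<gamma> M wstar (n j) \<le> (sqrt x + 1) * LF" .
    have "real N powr \<alpha> = (2 powr \<alpha>) ^ (q - j) * real (n j) powr \<alpha>"
      unfolding Nn[OF j] by (simp add: powr_mult pow2_powr del: of_nat_power)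
    then have "real N powr \<alpha> * M / K = (2 powr \<alpha>) ^ (q - j) * (real (n j) powr \<alpha> * M / K)"
      by simp
    then have "SN = s ^ (q - j) * sqrt x"
      unfolding SN_def x_def s_def by (simp only: real_sqrt_mult real_sqrt_power)
    then have sx: "sqrt x = SN * r ^ (q - j)"
      unfolding r_def using s1 by (simp add: power_one_over field_simps)
    have "real (n j) * iter_bound \<alpha> c \<gamma> M wstar (n j) \<le> real (n j) * ((sqrt x + 1) * LF)"
      using ib by (intro mult_left_mono) auto
    also have "\<dots> = real (n j) * LF + real (n j) * SN * r ^ (q - j) * LF"
      unfolding sx by (simp add: algebra_simps)
    also have "\<dots> \<le> real N * LF + real N * SN * r ^ (q - j) * LF"
      using nN[OF j] LF r unfolding SN_def using K M
      by (intro add_mono mult_right_mono mult_nonneg_nonneg) auto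
    finally show ?thesis .
  qed
  have geo: "(\<Sum>j\<le>q. r ^ (q - j)) \<le> s / (s - 1)"
  proof -
    have "(\<Sum>j\<le>q. r ^ (q - j)) = (\<Sum>j<Suc q. r ^ (Suc q - Suc j))"
      by (simp add: lessThan_Suc_atMost)
    also have "\<dots> = (\<Sum>j<Suc q. r ^ j)"
      by (rule sum.nat_diff_reindex)
    also have "\<dots> \<le> 1 / (1 - r)"
      using geometric_sum_less[OF r, of "{..<Suc q}"] by simp
    also have "\<dots> = s / (s - 1)" unfolding r_def using s1 by (simp add: field_simps)
    finally show ?thesis .
  qed
  have "(\<Sum>j\<le>q. real (2 ^ j * m0) * iter_bound \<alpha> c \<gamma> M wstar (2 ^ j * m0))
      = (\<Sum>j\<le>q. real (n j) * iter_bound \<alpha> c \<gamma> M wstar (n j))" unfolding n_def by simp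
  also have "\<dots> \<le> (\<Sum>j\<le>q. real N * LF + real N * SN * r ^ (q - j) * LF)"
    by (rule sum_mono) (rule tm, simp)
  also have "\<dots> = real (Suc q) * real N * LF + real N * SN * LF * (\<Sum>j\<le>q. r ^ (q - j))"
    by (simp add: sum.distrib sum_distrib_left sum_distrib_right algebra_simps)
  also have "\<dots> \<le> real (Suc q) * real N * LF + real N * SN * LF * (s / (s - 1))"
    using geo LF unfolding SN_def using K M by (intro add_left_mono mult_left_mono) auto
  also have "\<dots> = real N * (1 + real q + s / (s - 1) * SN) * LF"
    by (simp add: algebra_simps)
  also have "real q = log 2 (real N / real m0)"
    unfolding N using m0 by (simp add: log_nat_power)
  finally show ?thesis unfolding SN_def s_def K_def LF_def .
qed

lemma reg_up_low:
  fixes f :: "'a::euclidean_space \<Rightarrow> 'z \<Rightarrow> real" and G :: "'a \<Rightarrow> 'z \<Rightarrow> 'a"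
  assumes S: "finite S" "S \<noteq> {}"
    and inP: "\<forall>i\<in>S. X i \<omega> \<in> space P"
    and f_convex: "\<forall>z\<in>space P. convex_on UNIV (\<lambda>w. f w z)"
    and f_grad: "\<forall>z\<in>space P. \<forall>w. GDERIV (\<lambda>v. f v z) w :> G w z"
    and G_lip: "\<forall>z\<in>space P. \<forall>w v. norm (G w z - G v z) \<le> M * norm (w - v)"
  shows "reg_risk f X c \<gamma> \<alpha> S u \<omega> \<le> reg_risk f X c \<gamma> \<alpha> S y \<omega> + reg_grad G X c \<gamma> \<alpha> S y \<omega> \<bullet> (u - y)
           + (c * Vstat \<gamma> \<alpha> (card S) + M) / 2 * (norm (u - y))\<^sup>2"
    and "reg_risk f X c \<gamma> \<alpha> S y \<omega> + reg_grad G X c \<gamma> \<alpha> S y \<omega> \<bullet> (u - y)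
           + (c * Vstat \<gamma> \<alpha> (card S)) / 2 * (norm (u - y))\<^sup>2 \<le> reg_risk f X c \<gamma> \<alpha> S u \<omega>"
proof -
  define n where "n = real (card S)"
  have n: "0 < n" unfolding n_def using S by (simp add: card_gt_0_iff)
  define \<mu> where "\<mu> = c * Vstat \<gamma> \<alpha> (card S)"
  define SG where "SG = (\<Sum>i\<in>S. G y (X i \<omega>))"
  have quad: "(norm u)\<^sup>2 = (norm y)\<^sup>2 + 2 * (y \<bullet> (u - y)) + (norm (u - y))\<^sup>2"
    unfolding power2_norm_eq_inner by (simp add: inner_diff_left inner_diff_right inner_commute algebra_simps)
  have gr: "reg_grad G X c \<gamma> \<alpha> S y \<omega> \<bullet> (u - y) = (SG \<bullet> (u - y)) / n + \<mu> * (y \<bullet> (u - y))"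
    unfolding reg_grad_def SG_def n_def \<mu>_def by (simp add: inner_add_left)
  have rr: "reg_risk f X c \<gamma> \<alpha> S w \<omega> = (\<Sum>i\<in>S. f w (X i \<omega>)) / n + \<mu> / 2 * (norm w)\<^sup>2" for w
    unfolding reg_risk_def emp_loss_def n_def \<mu>_def by simp
  have sg: "SG \<bullet> (u - y) = (\<Sum>i\<in>S. G y (X i \<omega>) \<bullet> (u - y))"
    unfolding SG_def by (simp add: inner_sum_left)
  have su: "(\<Sum>i\<in>S. f u (X i \<omega>)) \<le> (\<Sum>i\<in>S. f y (X i \<omega>)) + SG \<bullet> (u - y) + n * (M / 2 * (norm (u - y))\<^sup>2)"
  proof -
    have "(\<Sum>i\<in>S. f u (X i \<omega>)) \<le> (\<Sum>i\<in>S. f y (X i \<omega>) + G y (X i \<omega>) \<bullet> (u - y) + M / 2 * (norm (u - y))\<^sup>2)"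
    proof (rule sum_mono)
      fix i assume "i \<in> S"
      then have z: "X i \<omega> \<in> space P" using inP by auto
      show "f u (X i \<omega>) \<le> f y (X i \<omega>) + G y (X i \<omega>) \<bullet> (u - y) + M / 2 * (norm (u - y))\<^sup>2"
        by (rule upper_quad[of "\<lambda>v. f v (X i \<omega>)" "\<lambda>w. G w (X i \<omega>)" M]) (use z f_grad G_lip in auto)
    qed
    then show ?thesis unfolding sg n_def by (simp add: sum.distrib)
  qed
  have sl: "(\<Sum>i\<in>S. f y (X i \<omega>)) + SG \<bullet> (u - y) \<le> (\<Sum>i\<in>S. f u (X i \<omega>))"
  proof -
    have "(\<Sum>i\<in>S. f y (X i \<omega>) + G y (X i \<omega>) \<bullet> (u - y)) \<le> (\<Sum>i\<in>S. f u (X i \<omega>))"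
    proof (rule sum_mono)
      fix i assume "i \<in> S"
      then have z: "X i \<omega> \<in> space P" using inP by auto
      show "f y (X i \<omega>) + G y (X i \<omega>) \<bullet> (u - y) \<le> f u (X i \<omega>)"
        by (rule lower_lin[of "\<lambda>v. f v (X i \<omega>)" "\<lambda>w. G w (X i \<omega>)"]) (use z f_grad f_convex in auto)
    qed
    then show ?thesis unfolding sg by (simp add: sum.distrib)
  qed
  have su': "(\<Sum>i\<in>S. f u (X i \<omega>)) / n \<le> (\<Sum>i\<in>S. f y (X i \<omega>)) / n + SG \<bullet> (u - y) / n + M / 2 * (norm (u - y))\<^sup>2"
    using divide_right_mono[OF su, of n] n by (simp add: add_divide_distrib)
  have sl': "(\<Sum>i\<in>S. f y (X i \<omega>)) / n + SG \<bullet> (u - y) / n \<le> (\<Sum>i\<in>S. f u (X i \<omega>)) / n"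
    using divide_right_mono[OF sl, of n] n by (simp add: add_divide_distrib)
  show "reg_risk f X c \<gamma> \<alpha> S u \<omega> \<le> reg_risk f X c \<gamma> \<alpha> S y \<omega> + reg_grad G X c \<gamma> \<alpha> S y \<omega> \<bullet> (u - y)
           + (c * Vstat \<gamma> \<alpha> (card S) + M) / 2 * (norm (u - y))\<^sup>2"
    unfolding rr gr \<mu>_def[symmetric] quad using su' by (simp add: algebra_simps add_divide_distrib)
  show "reg_risk f X c \<gamma> \<alpha> S y \<omega> + reg_grad G X c \<gamma> \<alpha> S y \<omega> \<bullet> (u - y)
           + (c * Vstat \<gamma> \<alpha> (card S)) / 2 * (norm (u - y))\<^sup>2 \<le> reg_risk f X c \<gamma> \<alpha> S u \<omega>"
    unfolding rr gr \<mu>_def[symmetric] quad using sl' by (simp add: algebra_simps add_divide_distrib)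
qed

lemma min_props:
  fixes R :: "'a::real_inner \<Rightarrow> real" and g :: "'a \<Rightarrow> 'a"
  assumes L: "0 < L"
    and up: "\<And>u y. R u \<le> R y + g y \<bullet> (u - y) + L / 2 * (norm (u - y))\<^sup>2"
    and low: "\<And>u y. R y + g y \<bullet> (u - y) + \<mu> / 2 * (norm (u - y))\<^sup>2 \<le> R u"
    and min: "\<And>u. R xs \<le> R u"
  shows "g xs = 0" "R u \<le> R xs + L / 2 * (norm (u - xs))\<^sup>2" "R xs + \<mu> / 2 * (norm (u - xs))\<^sup>2 \<le> R u"
proof -
  show g0: "g xs = 0"
  proof -
    have "R (xs - (1 / L) *\<^sub>R g xs) \<le> R xs + g xs \<bullet> ((xs - (1 / L) *\<^sub>R g xs) - xs) + L / 2 * (norm ((xs - (1 / L) *\<^sub>R g xs) - xs))\<^sup>2"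
      by (rule up)
    also have "\<dots> = R xs - (norm (g xs))\<^sup>2 / (2 * L)"
      using L by (simp add: power_mult_distrib field_simps power2_eq_square norm_self_inner)
    finally have "R xs \<le> R xs - (norm (g xs))\<^sup>2 / (2 * L)" using min[of "xs - (1 / L) *\<^sub>R g xs"] by linarith
    then have "(norm (g xs))\<^sup>2 / (2 * L) \<le> 0" by linarith
    then have "(norm (g xs))\<^sup>2 \<le> 0" using L by (simp add: divide_le_0_iff)
    then show ?thesis by simp
  qed
  show "R u \<le> R xs + L / 2 * (norm (u - xs))\<^sup>2" using up[of u xs] g0 by simp
  show "R xs + \<mu> / 2 * (norm (u - xs))\<^sup>2 \<le> R u" using low[of xs u] g0 by simp
qed

lemma measurable_minimizer:
  fixes Rw :: "'a::euclidean_space \<Rightarrow> 'o \<Rightarrow> real" and gw :: "'a \<Rightarrow> 'o \<Rightarrow> 'a" and xs :: "'o \<Rightarrow> 'a"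
  assumes meas[measurable]: "\<And>w. (\<lambda>\<omega>. Rw w \<omega>) \<in> borel_measurable Q"
    and L: "0 < L" and mu: "0 < \<mu>"
    and up: "\<And>\<omega> u y. \<omega> \<in> space Q \<Longrightarrow> Rw u \<omega> \<le> Rw y \<omega> + gw y \<omega> \<bullet> (u - y) + L / 2 * (norm (u - y))\<^sup>2"
    and low: "\<And>\<omega> u y. \<omega> \<in> space Q \<Longrightarrow> Rw y \<omega> + gw y \<omega> \<bullet> (u - y) + \<mu> / 2 * (norm (u - y))\<^sup>2 \<le> Rw u \<omega>"
    and min: "\<And>\<omega> u. \<omega> \<in> space Q \<Longrightarrow> Rw (xs \<omega>) \<omega> \<le> Rw u \<omega>"
  shows "xs \<in> borel_measurable Q"
proof -
  obtain D :: "'a set" where D: "countable D" "\<And>U. open U \<Longrightarrow> U \<noteq> {} \<Longrightarrow> \<exists>y\<in>D. y \<in> U"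
    using countable_dense_exists by blast
  have Dne: "D \<noteq> {}" using D(2)[of UNIV] by auto
  define d where "d = from_nat_into D"
  have dense: "\<exists>j. dist (d j) x < e" if "0 < e" for x e
  proof -
    have "\<exists>y\<in>D. y \<in> ball x e" using D(2)[of "ball x e"] that by simp
    then obtain y where "y \<in> D" "y \<in> ball x e" by blast
    moreover have "range d = D" unfolding d_def using D Dne by simp
    ultimately show ?thesis by (auto simp: dist_commute)
  qed
  define \<epsilon> where "\<epsilon> k = (inverse (real (Suc k)))\<^sup>2" for k
  have \<epsilon>: "0 < \<epsilon> k" for k unfolding \<epsilon>_def by simp
  define sel where "sel k \<omega> = d (LEAST j. \<forall>i. Rw (d j) \<omega> \<le> Rw (d i) \<omega> + \<epsilon> k)" for k \<omega>
  have pr: "Measurable.pred Q (\<lambda>\<omega>. \<forall>i. Rw (d j) \<omega> \<le> Rw (d i) \<omega> + \<epsilon> k)" for j k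
    by measurable
  have Jm: "(\<lambda>\<omega>. LEAST j. \<forall>i. Rw (d j) \<omega> \<le> Rw (d i) \<omega> + \<epsilon> k) \<in> measurable Q (count_space UNIV)" for k
    by (rule measurable_Least) (use pr in auto)
  have selm: "sel k \<in> borel_measurable Q" for k
    unfolding sel_def by (rule measurable_compose[OF Jm]) simp
  have conv: "(\<lambda>k. sel k \<omega>) \<longlonglongrightarrow> xs \<omega>" if \<omega>: "\<omega> \<in> space Q" for \<omega>
  proof -
    note mp = min_props[OF L up[OF \<omega>] low[OF \<omega>] min[OF \<omega>]]
    have bound: "norm (sel k \<omega> - xs \<omega>) \<le> (2 / sqrt \<mu>) * inverse (real (Suc k))" for k
    proof -
      define e where "e = sqrt (2 * \<epsilon> k / L)"
      have e: "0 < e" unfolding e_def using L \<epsilon> by simp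
      obtain j0 where j0: "dist (d j0) (xs \<omega>) < e" using dense[OF e] by blast
      have "(norm (d j0 - xs \<omega>))\<^sup>2 \<le> e\<^sup>2"
        using j0 by (intro power_mono) (auto simp: dist_norm)
      also have "e\<^sup>2 = 2 * \<epsilon> k / L" unfolding e_def using L \<epsilon> by (simp add: less_imp_le)
      finally have "L / 2 * (norm (d j0 - xs \<omega>))\<^sup>2 \<le> L / 2 * (2 * \<epsilon> k / L)"
        using L by (intro mult_left_mono) auto
      then have "L / 2 * (norm (d j0 - xs \<omega>))\<^sup>2 \<le> \<epsilon> k" using L by simp
      then have rj0: "Rw (d j0) \<omega> \<le> Rw (xs \<omega>) \<omega> + \<epsilon> k" using mp(2)[of "d j0"] by linarith
      have Pj0: "\<forall>i. Rw (d j0) \<omega> \<le> Rw (d i) \<omega> + \<epsilon> k" using rj0 min[OF \<omega>] by (smt (verit))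
      have "\<forall>i. Rw (sel k \<omega>) \<omega> \<le> Rw (d i) \<omega> + \<epsilon> k"
        unfolding sel_def by (rule LeastI[of _ j0]) (rule Pj0)
      then have "Rw (sel k \<omega>) \<omega> \<le> Rw (xs \<omega>) \<omega> + 2 * \<epsilon> k" using rj0 by (smt (verit))
      then have "\<mu> / 2 * (norm (sel k \<omega> - xs \<omega>))\<^sup>2 \<le> 2 * \<epsilon> k" using mp(3)[of "sel k \<omega>"] by linarith
      then have "(norm (sel k \<omega> - xs \<omega>))\<^sup>2 \<le> 4 / \<mu> * \<epsilon> k" using mu by (simp add: field_simps)
      also have "\<dots> = ((2 / sqrt \<mu>) * inverse (real (Suc k)))\<^sup>2"
        unfolding \<epsilon>_def using mu by (simp add: power_mult_distrib power_divide)
      finally show ?thesis by (rule power2_le_imp_le) (use mu in simp)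
    qed
    have "(\<lambda>k. sel k \<omega> - xs \<omega>) \<longlonglongrightarrow> 0"
    proof (rule Lim_null_comparison)
      show "\<forall>\<^sub>F k in sequentially. norm (sel k \<omega> - xs \<omega>) \<le> (2 / sqrt \<mu>) * inverse (real (Suc k))"
        using bound by simp
      show "(\<lambda>k. (2 / sqrt \<mu>) * inverse (real (Suc k))) \<longlonglongrightarrow> 0"
        by (rule tendsto_mult_right_zero[OF LIMSEQ_inverse_real_of_nat])
    qed
    then show ?thesis by (simp add: LIM_zero_iff)
  qed
  show ?thesis by (rule borel_measurable_LIMSEQ_metric[OF selm conv])
qed

lemma f_comp_meas:
  assumes f_meas: "(\<lambda>(w, z). f w z) \<in> borel_measurable (borel \<Otimes>\<^sub>M P)"
    and Xm: "X i \<in> measurable Q P" and w: "w \<in> borel_measurable Q"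
  shows "(\<lambda>\<omega>. f (w \<omega>) (X i \<omega>)) \<in> borel_measurable Q"
proof -
  have "(\<lambda>\<omega>. (w \<omega>, X i \<omega>)) \<in> measurable Q (borel \<Otimes>\<^sub>M P)"
    using w Xm by (rule measurable_Pair)
  from measurable_compose[OF this f_meas] show ?thesis by simp
qed

lemma emp_meas:
  assumes f_meas: "(\<lambda>(w, z). f w z) \<in> borel_measurable (borel \<Otimes>\<^sub>M P)"
    and Xm: "\<forall>i<N. X i \<in> measurable Q P" and S: "S \<subseteq> {..<N}" and w: "w \<in> borel_measurable Q"
  shows "(\<lambda>\<omega>. emp_loss f X S (w \<omega>) \<omega>) \<in> borel_measurable Q"
proof -
  have "(\<lambda>\<omega>. \<Sum>i\<in>S. f (w \<omega>) (X i \<omega>)) \<in> borel_measurable Q"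
  proof (rule borel_measurable_sum)
    fix i assume "i \<in> S" then have "i < N" using S by auto
    then have "X i \<in> measurable Q P" using Xm by auto
    then show "(\<lambda>\<omega>. f (w \<omega>) (X i \<omega>)) \<in> borel_measurable Q"
      by (rule f_comp_meas[OF f_meas _ w])
  qed
  then show ?thesis unfolding emp_loss_def by simp
qed

lemma reg_meas:
  assumes f_meas: "(\<lambda>(w, z). f w z) \<in> borel_measurable (borel \<Otimes>\<^sub>M P)"
    and Xm: "\<forall>i<N. X i \<in> measurable Q P" and S: "S \<subseteq> {..<N}" and w: "w \<in> borel_measurable Q"
  shows "(\<lambda>\<omega>. reg_risk f X c \<gamma> \<alpha> S (w \<omega>) \<omega>) \<in> borel_measurable Q"
  unfolding reg_risk_def using emp_meas[OF f_meas Xm S w] w by measurable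

lemma pop_meas:
  assumes P: "prob_space P" and f_meas: "(\<lambda>(w, z). f w z) \<in> borel_measurable (borel \<Otimes>\<^sub>M P)"
  shows "(pop_loss P f :: 'a::euclidean_space \<Rightarrow> real) \<in> borel_measurable borel"
proof -
  interpret P: prob_space P by (rule P)
  have "(\<lambda>w. \<integral>z. f w z \<partial>P) \<in> borel_measurable (borel :: 'a measure)"
    by (rule P.borel_measurable_lebesgue_integral) (use f_meas in simp)
  then show ?thesis unfolding pop_loss_def[abs_def] .
qed

lemma e_bound:
  assumes stat_acc: "\<forall>S. S \<subseteq> {..<N} \<and> S \<noteq> {} \<longrightarrow>
        (\<integral>\<^sup>+\<omega>. (SUP w. ennreal \<bar>pop_loss P f w - emp_loss f X S w \<omega>\<bar>) \<partial>Q)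
          \<le> ennreal (Vstat \<gamma> \<alpha> (card S))"
    and S: "S \<subseteq> {..<N}" "S \<noteq> {}"
  shows "(\<integral>\<^sup>+\<omega>. ennreal \<bar>pop_loss P f (w \<omega>) - emp_loss f X S (w \<omega>) \<omega>\<bar> \<partial>Q) \<le> ennreal (Vstat \<gamma> \<alpha> (card S))"
proof -
  have "(\<integral>\<^sup>+\<omega>. ennreal \<bar>pop_loss P f (w \<omega>) - emp_loss f X S (w \<omega>) \<omega>\<bar> \<partial>Q)
      \<le> (\<integral>\<^sup>+\<omega>. (SUP w. ennreal \<bar>pop_loss P f w - emp_loss f X S w \<omega>\<bar>) \<partial>Q)"
    by (rule nn_integral_mono) (rule SUP_upper, simp)
  also have "\<dots> \<le> ennreal (Vstat \<gamma> \<alpha> (card S))" using stat_acc S by blast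
  finally show ?thesis .
qed

lemma piece:
  assumes Q: "prob_space Q" and pm: "p \<in> borel_measurable Q" and nn: "\<forall>\<omega>\<in>space Q. 0 \<le> p \<omega>"
    and b: "(\<integral>\<^sup>+\<omega>. ennreal (p \<omega>) \<partial>Q) \<le> ennreal V" and V: "0 \<le> V"
  shows "integrable Q p \<and> integral\<^sup>L Q p \<le> V"
proof -
  have ae: "AE \<omega> in Q. 0 \<le> p \<omega>" using nn by auto
  have "(\<integral>\<^sup>+\<omega>. ennreal (p \<omega>) \<partial>Q) < \<infinity>" using b by (simp add: le_less_trans)
  then have i: "integrable Q p" by (rule integrableI_nonneg[OF pm ae])
  have "ennreal (integral\<^sup>L Q p) \<le> ennreal V" using nn_integral_eq_integral[OF i ae] b by simp
  then have "integral\<^sup>L Q p \<le> V" using V by (simp add: ennreal_le_iff)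
  then show ?thesis using i by simp
qed

lemma comb_add:
  fixes p1 p2 :: "'a \<Rightarrow> real"
  assumes "integrable Q p1 \<and> integral\<^sup>L Q p1 \<le> b1" "integrable Q p2 \<and> integral\<^sup>L Q p2 \<le> b2"
  shows "integrable Q (\<lambda>\<omega>. p1 \<omega> + p2 \<omega>) \<and> integral\<^sup>L Q (\<lambda>\<omega>. p1 \<omega> + p2 \<omega>) \<le> b1 + b2"
proof -
  from assms have i1: "integrable Q p1" and b1: "integral\<^sup>L Q p1 \<le> b1"
    and i2: "integrable Q p2" and b2: "integral\<^sup>L Q p2 \<le> b2" by auto
  have "integral\<^sup>L Q (\<lambda>\<omega>. p1 \<omega> + p2 \<omega>) = integral\<^sup>L Q p1 + integral\<^sup>L Q p2"
    by (rule Bochner_Integration.integral_add[OF i1 i2])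
  then show ?thesis using i1 i2 b1 b2 by simp
qed

lemma comb_scale:
  assumes "integrable Q p \<and> integral\<^sup>L Q p \<le> b" "0 \<le> (k::real)"
  shows "integrable Q (\<lambda>\<omega>. k * p \<omega>) \<and> integral\<^sup>L Q (\<lambda>\<omega>. k * p \<omega>) \<le> k * b"
  using assms by (simp add: mult_left_mono)

lemma comb_const:
  assumes "prob_space Q"
  shows "integrable Q (\<lambda>\<omega>. K::real) \<and> integral\<^sup>L Q (\<lambda>\<omega>. K) \<le> K"
proof -
  interpret prob_space Q by (rule assms)
  show ?thesis by (simp add: prob_space)
qed

lemma rho_bound:
  fixes t F :: real
  assumes t: "0 < t" "t \<le> 1" and F: "0 < F" and s: "ln F / t \<le> real n"
  shows "(1 - t) ^ n \<le> 1 / F"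
proof -
  have "t * real n \<ge> ln F" using s t by (simp add: field_simps)
  have "(1 - t) ^ n \<le> (exp (- t)) ^ n"
    using t by (intro power_mono) (auto simp: exp_ge_add_one_self[of "-t", simplified])
  also have "\<dots> = exp (- (t * real n))" by (simp add: exp_of_nat_mult[symmetric] mult.commute)
  also have "\<dots> \<le> exp (- ln F)" using \<open>t * real n \<ge> ln F\<close> by simp
  also have "\<dots> = 1 / F" using F by (simp add: exp_minus inverse_eq_divide)
  finally show ?thesis .
qed

lemma part_i:
  fixes Q :: "'o measure" and P :: "'z measure"
    and X :: "nat \<Rightarrow> 'o \<Rightarrow> 'z" and N :: nat
    and f :: "'a::euclidean_space \<Rightarrow> 'z \<Rightarrow> real" and G :: "'a \<Rightarrow> 'z \<Rightarrow> 'a"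
    and M c \<gamma> \<alpha> :: real and wstar :: 'a
    and m s :: nat and Sm Sn :: "nat set" and wm wms wns :: "'o \<Rightarrow> 'a"
  assumes Q: "prob_space Q" and P: "prob_space P"
    and X_meas: "\<forall>i<N. X i \<in> measurable Q P"
    and f_meas: "(\<lambda>(w, z). f w z) \<in> borel_measurable (borel \<Otimes>\<^sub>M P)"
    and f_convex: "\<forall>z\<in>space P. convex_on UNIV (\<lambda>w. f w z)"
    and f_grad: "\<forall>z\<in>space P. \<forall>w. GDERIV (\<lambda>v. f v z) w :> G w z"
    and M_pos: "M > 0"
    and G_lip: "\<forall>z\<in>space P. \<forall>w v. norm (G w z - G v z) \<le> M * norm (w - v)"
    and \<gamma>_pos: "\<gamma> > 0" and \<alpha>_ge: "1/2 \<le> \<alpha>" and c_pos: "c > 0"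
    and stat_acc: "\<forall>S. S \<subseteq> {..<N} \<and> S \<noteq> {} \<longrightarrow>
        (\<integral>\<^sup>+\<omega>. (SUP w. ennreal \<bar>pop_loss P f w - emp_loss f X S w \<omega>\<bar>) \<partial>Q)
          \<le> ennreal (Vstat \<gamma> \<alpha> (card S))"
    and wstar_min: "\<forall>w. pop_loss P f wstar \<le> pop_loss P f w"
    and m: "1 \<le> m" and SmSn: "Sm \<subseteq> Sn" and SnN: "Sn \<subseteq> {..<N}"
    and cSm: "card Sm = m" and cSn: "card Sn = 2 * m"
    and wm_meas: "wm \<in> borel_measurable Q"
    and wms_min: "\<forall>\<omega>\<in>space Q. \<forall>w. reg_risk f X c \<gamma> \<alpha> Sm (wms \<omega>) \<omega> \<le> reg_risk f X c \<gamma> \<alpha> Sm w \<omega>"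
    and wns_min: "\<forall>\<omega>\<in>space Q. \<forall>w. reg_risk f X c \<gamma> \<alpha> Sn (wns \<omega>) \<omega> \<le> reg_risk f X c \<gamma> \<alpha> Sn w \<omega>"
    and wm_acc: "(\<integral>\<^sup>+\<omega>. ennreal (reg_risk f X c \<gamma> \<alpha> Sm (wm \<omega>) \<omega> - reg_risk f X c \<gamma> \<alpha> Sm (wms \<omega>) \<omega>) \<partial>Q)
            \<le> ennreal (Vstat \<gamma> \<alpha> m)"
    and s_ge: "real s \<ge> iter_bound \<alpha> c \<gamma> M wstar (2 * m)"
  shows "(\<integral>\<^sup>+\<omega>. ennreal (reg_risk f X c \<gamma> \<alpha> Sn
                 (fst (agd (\<lambda>y. reg_grad G X c \<gamma> \<alpha> Sn y \<omega>)
                           (agd_eta c \<gamma> \<alpha> M (2 * m)) (agd_beta c \<gamma> \<alpha> M (2 * m)) (wm \<omega>) s)) \<omega>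
               - reg_risk f X c \<gamma> \<alpha> Sn (wns \<omega>) \<omega>) \<partial>Q)
          \<le> ennreal (Vstat \<gamma> \<alpha> (2 * m))"
proof -
  define Vn where "Vn = Vstat \<gamma> \<alpha> (2 * m)"
  define Vm where "Vm = Vstat \<gamma> \<alpha> m"
  have m0: "0 < m" using m by simp
  have finSn: "finite Sn" using SnN finite_subset by blast
  have finSm: "finite Sm" using SmSn finSn finite_subset by blast
  have Sn_ne: "Sn \<noteq> {}" using cSn m0 by auto
  have Sm_ne: "Sm \<noteq> {}" using cSm m0 by auto
  have SmN: "Sm \<subseteq> {..<N}" using SmSn SnN by blast
  define D where "D = Sn - Sm"
  have cD: "card D = m" unfolding D_def using card_Diff_subset[OF finSm SmSn] cSn cSm by simp
  have DN: "D \<subseteq> {..<N}" unfolding D_def using SnN by blast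
  have D_ne: "D \<noteq> {}" using cD m0 by auto
  have pa: "0 < 2 powr \<alpha>" by simp
  have mpa: "0 < real m powr \<alpha>" using m0 by simp
  have Vn_pos: "0 < Vn" unfolding Vn_def Vstat_def using \<gamma>_pos m0 by simp
  have Vm_eq: "Vm = 2 powr \<alpha> * Vn"
    unfolding Vm_def Vn_def Vstat_def using pa mpa by (simp add: powr_mult field_simps)
  define r where "r = 2 powr \<alpha> - 1"
  have r: "0 \<le> r" unfolding r_def using \<alpha>_ge ge_one_powr_ge_zero[of 2 \<alpha>] by simp
  have Vm_r: "Vm = (1 + r) * Vn" unfolding r_def Vm_eq by simp
  have inP: "X i \<omega> \<in> space P" if "\<omega> \<in> space Q" "i < N" for i \<omega>
    using measurable_space[of "X i" Q P \<omega>] X_meas that by auto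
  define Rn where "Rn w \<omega> = reg_risk f X c \<gamma> \<alpha> Sn w \<omega>" for w \<omega>
  define Rm where "Rm w \<omega> = reg_risk f X c \<gamma> \<alpha> Sm w \<omega>" for w \<omega>
  define gn where "gn y \<omega> = reg_grad G X c \<gamma> \<alpha> Sn y \<omega>" for y \<omega>
  define gm where "gm y \<omega> = reg_grad G X c \<gamma> \<alpha> Sm y \<omega>" for y \<omega>
  have inPn: "\<forall>i\<in>Sn. X i \<omega> \<in> space P" if "\<omega> \<in> space Q" for \<omega> using inP[OF that] SnN by auto
  have inPm: "\<forall>i\<in>Sm. X i \<omega> \<in> space P" if "\<omega> \<in> space Q" for \<omega> using inP[OF that] SmN by auto
  have upn: "Rn u \<omega> \<le> Rn y \<omega> + gn y \<omega> \<bullet> (u - y) + (c * Vn + M) / 2 * (norm (u - y))\<^sup>2"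
    if "\<omega> \<in> space Q" for \<omega> u y
    using reg_up_low(1)[where S=Sn and X=X and \<omega>=\<omega> and P=P and f=f and G=G and M=M and c=c and \<gamma>=\<gamma> and \<alpha>=\<alpha> and u=u and y=y, OF finSn Sn_ne inPn[OF that] f_convex f_grad G_lip]
    unfolding Rn_def gn_def Vn_def cSn by blast
  have lown: "Rn y \<omega> + gn y \<omega> \<bullet> (u - y) + (c * Vn) / 2 * (norm (u - y))\<^sup>2 \<le> Rn u \<omega>"
    if "\<omega> \<in> space Q" for \<omega> u y
    using reg_up_low(2)[where S=Sn and X=X and \<omega>=\<omega> and P=P and f=f and G=G and M=M and c=c and \<gamma>=\<gamma> and \<alpha>=\<alpha> and u=u and y=y, OF finSn Sn_ne inPn[OF that] f_convex f_grad G_lip]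
    unfolding Rn_def gn_def Vn_def cSn by blast
  have upm: "Rm u \<omega> \<le> Rm y \<omega> + gm y \<omega> \<bullet> (u - y) + (c * Vm + M) / 2 * (norm (u - y))\<^sup>2"
    if "\<omega> \<in> space Q" for \<omega> u y
    using reg_up_low(1)[where S=Sm and X=X and \<omega>=\<omega> and P=P and f=f and G=G and M=M and c=c and \<gamma>=\<gamma> and \<alpha>=\<alpha> and u=u and y=y, OF finSm Sm_ne inPm[OF that] f_convex f_grad G_lip]
    unfolding Rm_def gm_def Vm_def cSm by blast
  have lowm: "Rm y \<omega> + gm y \<omega> \<bullet> (u - y) + (c * Vm) / 2 * (norm (u - y))\<^sup>2 \<le> Rm u \<omega>"
    if "\<omega> \<in> space Q" for \<omega> u y
    using reg_up_low(2)[where S=Sm and X=X and \<omega>=\<omega> and P=P and f=f and G=G and M=M and c=c and \<gamma>=\<gamma> and \<alpha>=\<alpha> and u=u and y=y, OF finSm Sm_ne inPm[OF that] f_convex f_grad G_lip]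
    unfolding Rm_def gm_def Vm_def cSm by blast
  have cVn: "0 < c * Vn" using c_pos Vn_pos by simp
  have cVm: "0 < c * Vm" using c_pos Vn_pos Vm_eq pa by simp
  have Rn_meas: "(\<lambda>\<omega>. Rn (w \<omega>) \<omega>) \<in> borel_measurable Q" if "w \<in> borel_measurable Q" for w
    unfolding Rn_def by (rule reg_meas[OF f_meas X_meas SnN that])
  have Rm_meas: "(\<lambda>\<omega>. Rm (w \<omega>) \<omega>) \<in> borel_measurable Q" if "w \<in> borel_measurable Q" for w
    unfolding Rm_def by (rule reg_meas[OF f_meas X_meas SmN that])
  have wns_meas: "wns \<in> borel_measurable Q"
  proof (rule measurable_minimizer[where Rw = Rn and gw = gn and L = "c * Vn + M" and \<mu> = "c * Vn"])
    show "(\<lambda>\<omega>. Rn w \<omega>) \<in> borel_measurable Q" for w using Rn_meas[of "\<lambda>_. w"] by simp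
  qed (use cVn M_pos in simp, rule cVn, erule upn, erule lown, use wns_min in \<open>simp add: Rn_def\<close>)
  have wms_meas: "wms \<in> borel_measurable Q"
  proof (rule measurable_minimizer[where Rw = Rm and gw = gm and L = "c * Vm + M" and \<mu> = "c * Vm"])
    show "(\<lambda>\<omega>. Rm w \<omega>) \<in> borel_measurable Q" for w using Rm_meas[of "\<lambda>_. w"] by simp
  qed (use cVm M_pos in simp, rule cVm, erule upm, erule lowm, use wms_min in \<open>simp add: Rm_def\<close>)
  define F where "F = 6 * 2 powr \<alpha> + r * (4 + c * (norm wstar)\<^sup>2)"
  have pa1: "1 \<le> 2 powr \<alpha>" using \<alpha>_ge ge_one_powr_ge_zero[of 2 \<alpha>] by simp
  have "0 \<le> r * (4 + c * (norm wstar)\<^sup>2)" using r c_pos by (intro mult_nonneg_nonneg) auto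
  then have F6: "6 \<le> F" unfolding F_def using pa1 by linarith
  have F: "0 < F" using F6 by simp
  have LF: "log_factor \<alpha> c wstar = ln F" unfolding log_factor_def F_def r_def ..
  define \<tau> where "\<tau> = sqrt (c * Vn) / sqrt (c * Vn + M)"
  have \<tau>: "0 < \<tau>" "\<tau> \<le> 1" unfolding \<tau>_def using cVn M_pos by (auto simp: real_sqrt_le_iff)
  have ratio: "(c * Vn + M) / (c * Vn) = (real (2 * m) powr \<alpha> * M + c * \<gamma>) / (c * \<gamma>)"
    unfolding Vn_def Vstat_def using c_pos \<gamma>_pos m0 by (simp add: field_simps)
  have inv\<tau>: "1 / \<tau> = sqrt ((real (2 * m) powr \<alpha> * M + c * \<gamma>) / (c * \<gamma>))"
    unfolding ratio[symmetric] \<tau>_def by (simp add: real_sqrt_divide)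
  have rho: "(1 - \<tau>) ^ s \<le> 1 / F"
  proof (rule rho_bound[OF \<tau> F])
    have "ln F / \<tau> = iter_bound \<alpha> c \<gamma> M wstar (2 * m)"
      unfolding iter_bound_def LF inv\<tau>[symmetric] by simp
    then show "ln F / \<tau> \<le> real s" using s_ge by simp
  qed
  have eta: "agd_eta c \<gamma> \<alpha> M (2 * m) = 1 / (c * Vn + M)" unfolding agd_eta_def Vn_def ..
  have beta: "agd_beta c \<gamma> \<alpha> M (2 * m) = (sqrt (c * Vn + M) - sqrt (c * Vn)) / (sqrt (c * Vn + M) + sqrt (c * Vn))"
    unfolding agd_beta_def Vn_def ..
  define xs where "xs \<omega> = fst (agd (\<lambda>y. gn y \<omega>) (agd_eta c \<gamma> \<alpha> M (2 * m)) (agd_beta c \<gamma> \<alpha> M (2 * m)) (wm \<omega>) s)" for \<omega>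
  have P1: "Rn (xs \<omega>) \<omega> - Rn (wns \<omega>) \<omega> \<le> 2 / F * (Rn (wm \<omega>) \<omega> - Rn (wns \<omega>) \<omega>)"
    if \<omega>: "\<omega> \<in> space Q" for \<omega>
  proof -
    have min: "\<And>u. Rn (wns \<omega>) \<omega> \<le> Rn u \<omega>" using wns_min \<omega> unfolding Rn_def by blast
    have "Rn (xs \<omega>) \<omega> - Rn (wns \<omega>) \<omega> \<le> 2 * (1 - \<tau>) ^ s * (Rn (wm \<omega>) \<omega> - Rn (wns \<omega>) \<omega>)"
      unfolding xs_def eta beta \<tau>_def
      by (rule agd_conv[where R = "\<lambda>u. Rn u \<omega>" and g = "\<lambda>y. gn y \<omega>"])
        (rule cVn, use M_pos in simp, rule upn[OF \<omega>], rule lown[OF \<omega>], rule min)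
    also have "\<dots> \<le> 2 * (1 / F) * (Rn (wm \<omega>) \<omega> - Rn (wns \<omega>) \<omega>)"
      using rho min[of "wm \<omega>"] by (intro mult_right_mono mult_left_mono) auto
    finally show ?thesis by simp
  qed
  define e where "e S w \<omega> = \<bar>pop_loss P f w - emp_loss f X S w \<omega>\<bar>" for S w \<omega>
  define a where "a = c * Vn / 2"
  have a: "0 \<le> a" unfolding a_def using cVn by simp
  define K where "K = r * (a * (norm wstar)\<^sup>2)"
  have K: "0 \<le> K" unfolding K_def using r a by simp
  define H where "H \<omega> = (Rm (wm \<omega>) \<omega> - Rm (wms \<omega>) \<omega>) + 1/2 * e D (wm \<omega>) \<omega> + 1/2 * e Sm (wm \<omega>) \<omega>
      + 1/2 * e D (wns \<omega>) \<omega> + 1/2 * e Sm (wns \<omega>) \<omega> + r * e Sn wstar \<omega> + r * e Sn (wns \<omega>) \<omega> + K" for \<omega>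
  have split: "emp_loss f X Sn w \<omega> = (emp_loss f X Sm w \<omega> + emp_loss f X D w \<omega>) / 2" for w \<omega>
  proof -
    have "(\<Sum>i\<in>Sn. f w (X i \<omega>)) = (\<Sum>i\<in>D. f w (X i \<omega>)) + (\<Sum>i\<in>Sm. f w (X i \<omega>))"
      unfolding D_def by (rule sum.subset_diff[OF SmSn finSn])
    then show ?thesis unfolding emp_loss_def cSn cSm cD using m0 by (simp add: field_simps)
  qed
  have Rn_eq: "Rn w \<omega> = emp_loss f X Sn w \<omega> + a * (norm w)\<^sup>2" for w \<omega>
    unfolding Rn_def reg_risk_def a_def Vn_def cSn by simp
  have Rm_eq: "Rm w \<omega> = emp_loss f X Sm w \<omega> + a * (norm w)\<^sup>2 + r * (a * (norm w)\<^sup>2)" for w \<omega>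
  proof -
    have "Rm w \<omega> = emp_loss f X Sm w \<omega> + c * Vm / 2 * (norm w)\<^sup>2"
      unfolding Rm_def reg_risk_def Vm_def cSm by simp
    also have "c * Vm / 2 * (norm w)\<^sup>2 = a * (norm w)\<^sup>2 + r * (a * (norm w)\<^sup>2)"
      unfolding Vm_r a_def by (simp add: algebra_simps)
    finally show ?thesis by (simp only: add.assoc)
  qed
  have ab: "x \<le> \<bar>x\<bar>" "- x \<le> \<bar>x\<bar>" for x :: real by auto
  have P2: "Rn (wm \<omega>) \<omega> - Rn (wns \<omega>) \<omega> \<le> H \<omega>" if \<omega>: "\<omega> \<in> space Q" for \<omega>
  proof -
    have F1: "Rm (wms \<omega>) \<omega> \<le> Rm (wns \<omega>) \<omega>" using wms_min \<omega> unfolding Rm_def by blast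
    have F2: "Rn (wns \<omega>) \<omega> \<le> Rn wstar \<omega>" using wns_min \<omega> unfolding Rn_def by blast
    have F3: "pop_loss P f wstar \<le> pop_loss P f (wns \<omega>)" using wstar_min by blast
    have "a * (norm (wns \<omega>))\<^sup>2 \<le> e Sn wstar \<omega> + e Sn (wns \<omega>) \<omega> + a * (norm wstar)\<^sup>2"
      using F2 F3 ab[of "pop_loss P f wstar - emp_loss f X Sn wstar \<omega>"]
        ab[of "pop_loss P f (wns \<omega>) - emp_loss f X Sn (wns \<omega>) \<omega>"]
      unfolding Rn_eq e_def by linarith
    then have "r * (a * (norm (wns \<omega>))\<^sup>2) \<le> r * (e Sn wstar \<omega> + e Sn (wns \<omega>) \<omega> + a * (norm wstar)\<^sup>2)"
      using r by (rule mult_left_mono)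
    then have F4: "r * (a * (norm (wns \<omega>))\<^sup>2) \<le> r * e Sn wstar \<omega> + r * e Sn (wns \<omega>) \<omega> + K"
      unfolding K_def by (simp add: algebra_simps)
    have F5: "0 \<le> r * (a * (norm (wm \<omega>))\<^sup>2)" using r a by simp
    have ed: "pop_loss P f w - emp_loss f X S w \<omega> \<le> e S w \<omega>" "- (pop_loss P f w - emp_loss f X S w \<omega>) \<le> e S w \<omega>" for S w
      unfolding e_def by auto
    have SA: "emp_loss f X D (wm \<omega>) \<omega> - emp_loss f X Sm (wm \<omega>) \<omega> \<le> e D (wm \<omega>) \<omega> + e Sm (wm \<omega>) \<omega>"
      using ed[of "wm \<omega>" D] ed[of "wm \<omega>" Sm] by linarith
    have SB: "emp_loss f X Sm (wns \<omega>) \<omega> - emp_loss f X D (wns \<omega>) \<omega> \<le> e D (wns \<omega>) \<omega> + e Sm (wns \<omega>) \<omega>"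
      using ed[of "wns \<omega>" D] ed[of "wns \<omega>" Sm] by linarith
    show ?thesis
      unfolding H_def Rn_eq Rm_eq split
      using F1[unfolded Rm_eq] F4 F5 SA SB
      by (simp add: field_simps)
  qed
  have pm: "pop_loss P f \<in> borel_measurable borel" by (rule pop_meas[OF P f_meas])
  have e_int: "integrable Q (\<lambda>\<omega>. e S (w \<omega>) \<omega>) \<and> integral\<^sup>L Q (\<lambda>\<omega>. e S (w \<omega>) \<omega>) \<le> Vstat \<gamma> \<alpha> (card S)"
    if S: "S \<subseteq> {..<N}" "S \<noteq> {}" and w: "w \<in> borel_measurable Q" for S w
  proof (rule piece[OF Q])
    have "(\<lambda>\<omega>. pop_loss P f (w \<omega>)) \<in> borel_measurable Q" by (rule measurable_compose[OF w pm])
    moreover have "(\<lambda>\<omega>. emp_loss f X S (w \<omega>) \<omega>) \<in> borel_measurable Q" by (rule emp_meas[OF f_meas X_meas S(1) w])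
    ultimately show "(\<lambda>\<omega>. e S (w \<omega>) \<omega>) \<in> borel_measurable Q"
      unfolding e_def by (intro borel_measurable_abs borel_measurable_diff)
    show "\<forall>\<omega>\<in>space Q. 0 \<le> e S (w \<omega>) \<omega>" unfolding e_def by simp
    show "(\<integral>\<^sup>+\<omega>. ennreal (e S (w \<omega>) \<omega>) \<partial>Q) \<le> ennreal (Vstat \<gamma> \<alpha> (card S))"
      unfolding e_def by (rule e_bound[OF stat_acc S])
    show "0 \<le> Vstat \<gamma> \<alpha> (card S)" unfolding Vstat_def using \<gamma>_pos by simp
  qed
  have iA: "integrable Q (\<lambda>\<omega>. Rm (wm \<omega>) \<omega> - Rm (wms \<omega>) \<omega>) \<and> integral\<^sup>L Q (\<lambda>\<omega>. Rm (wm \<omega>) \<omega> - Rm (wms \<omega>) \<omega>) \<le> Vm"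
  proof (rule piece[OF Q])
    show "(\<lambda>\<omega>. Rm (wm \<omega>) \<omega> - Rm (wms \<omega>) \<omega>) \<in> borel_measurable Q"
      using Rm_meas[OF wm_meas] Rm_meas[OF wms_meas] by (rule borel_measurable_diff)
    show "\<forall>\<omega>\<in>space Q. 0 \<le> Rm (wm \<omega>) \<omega> - Rm (wms \<omega>) \<omega>" using wms_min unfolding Rm_def by simp
    show "(\<integral>\<^sup>+\<omega>. ennreal (Rm (wm \<omega>) \<omega> - Rm (wms \<omega>) \<omega>) \<partial>Q) \<le> ennreal Vm"
      using wm_acc unfolding Rm_def Vm_def .
    show "0 \<le> Vm" using Vm_eq Vn_pos pa by simp
  qed
  have hf: "1/2 \<ge> (0::real)" by simp
  have e1: "integrable Q (\<lambda>\<omega>. e D (wm \<omega>) \<omega>) \<and> integral\<^sup>L Q (\<lambda>\<omega>. e D (wm \<omega>) \<omega>) \<le> Vm"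
    using e_int[OF DN D_ne wm_meas] unfolding cD Vm_def .
  have e2: "integrable Q (\<lambda>\<omega>. e Sm (wm \<omega>) \<omega>) \<and> integral\<^sup>L Q (\<lambda>\<omega>. e Sm (wm \<omega>) \<omega>) \<le> Vm"
    using e_int[OF SmN Sm_ne wm_meas] unfolding cSm Vm_def .
  have e3: "integrable Q (\<lambda>\<omega>. e D (wns \<omega>) \<omega>) \<and> integral\<^sup>L Q (\<lambda>\<omega>. e D (wns \<omega>) \<omega>) \<le> Vm"
    using e_int[OF DN D_ne wns_meas] unfolding cD Vm_def .
  have e4: "integrable Q (\<lambda>\<omega>. e Sm (wns \<omega>) \<omega>) \<and> integral\<^sup>L Q (\<lambda>\<omega>. e Sm (wns \<omega>) \<omega>) \<le> Vm"
    using e_int[OF SmN Sm_ne wns_meas] unfolding cSm Vm_def .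
  have e5: "integrable Q (\<lambda>\<omega>. e Sn wstar \<omega>) \<and> integral\<^sup>L Q (\<lambda>\<omega>. e Sn wstar \<omega>) \<le> Vn"
  proof -
    have "(\<lambda>_. wstar) \<in> borel_measurable Q" by simp
    from e_int[OF SnN Sn_ne this] show ?thesis unfolding cSn Vn_def .
  qed
  have e6: "integrable Q (\<lambda>\<omega>. e Sn (wns \<omega>) \<omega>) \<and> integral\<^sup>L Q (\<lambda>\<omega>. e Sn (wns \<omega>) \<omega>) \<le> Vn"
    using e_int[OF SnN Sn_ne wns_meas] unfolding cSn Vn_def .
  have iH: "integrable Q H \<and> integral\<^sup>L Q H \<le> Vm + 1/2 * Vm + 1/2 * Vm + 1/2 * Vm + 1/2 * Vm + r * Vn + r * Vn + K"
    unfolding H_def[abs_def]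
    by (intro comb_add comb_scale comb_const[OF Q] iA e1 e2 e3 e4 e5 e6 hf r)
  have bound_eq: "2 / F * (Vm + 1/2 * Vm + 1/2 * Vm + 1/2 * Vm + 1/2 * Vm + r * Vn + r * Vn + K) = Vn"
  proof -
    have eqb: "Vm + 1/2 * Vm + 1/2 * Vm + 1/2 * Vm + 1/2 * Vm + r * Vn + r * Vn + K = F * Vn / 2"
      unfolding F_def K_def a_def Vm_eq by (simp add: algebra_simps)
    have "2 / F * (F * Vn / 2) = Vn" using F by simp
    then show ?thesis unfolding eqb .
  qed
  have iH2: "integrable Q (\<lambda>\<omega>. 2 / F * H \<omega>) \<and> integral\<^sup>L Q (\<lambda>\<omega>. 2 / F * H \<omega>) \<le> Vn"
    using comb_scale[OF iH, of "2 / F"] F bound_eq by simp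
  have Hnn: "0 \<le> 2 / F * H \<omega>" if "\<omega> \<in> space Q" for \<omega>
  proof -
    have "0 \<le> Rn (wm \<omega>) \<omega> - Rn (wns \<omega>) \<omega>" using wns_min that unfolding Rn_def by simp
    then show ?thesis using P2[OF that] F by simp
  qed
  have "(\<integral>\<^sup>+\<omega>. ennreal (Rn (xs \<omega>) \<omega> - Rn (wns \<omega>) \<omega>) \<partial>Q) \<le> (\<integral>\<^sup>+\<omega>. ennreal (2 / F * H \<omega>) \<partial>Q)"
  proof (rule nn_integral_mono)
    fix \<omega> assume \<omega>: "\<omega> \<in> space Q"
    have "Rn (xs \<omega>) \<omega> - Rn (wns \<omega>) \<omega> \<le> 2 / F * H \<omega>"
      using P1[OF \<omega>] P2[OF \<omega>] F by (smt (verit) divide_pos_pos mult_left_mono)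
    then show "ennreal (Rn (xs \<omega>) \<omega> - Rn (wns \<omega>) \<omega>) \<le> ennreal (2 / F * H \<omega>)"
      by (rule ennreal_leI)
  qed
  also have "\<dots> = ennreal (integral\<^sup>L Q (\<lambda>\<omega>. 2 / F * H \<omega>))"
    using iH2 Hnn by (intro nn_integral_eq_integral) auto
  also have "\<dots> \<le> ennreal Vn" using iH2 by (intro ennreal_leI) simp
  finally show ?thesis unfolding xs_def Rn_def gn_def Vn_def .
qed

theorem theorem3:
  fixes Q :: "'o measure" and P :: "'z measure"
    and X :: "nat \<Rightarrow> 'o \<Rightarrow> 'z" and N :: nat
    and f :: "'a::euclidean_space \<Rightarrow> 'z \<Rightarrow> real" and G :: "'a \<Rightarrow> 'z \<Rightarrow> 'a"
    and M c \<gamma> \<alpha> :: real and wstar :: 'a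
  assumes Q: "prob_space Q" and P: "prob_space P"
    and X_meas: "\<forall>i<N. X i \<in> measurable Q P"
    and X_distr: "\<forall>i<N. distr Q P (X i) = P"
    and X_indep: "prob_space.indep_vars Q (\<lambda>_. P) X {..<N}"
    and f_meas: "(\<lambda>(w, z). f w z) \<in> borel_measurable (borel \<Otimes>\<^sub>M P)"
    and f_convex: "\<forall>z\<in>space P. convex_on UNIV (\<lambda>w. f w z)"
    and f_grad: "\<forall>z\<in>space P. \<forall>w. GDERIV (\<lambda>v. f v z) w :> G w z"
    and M_pos: "M > 0"
    and G_lip: "\<forall>z\<in>space P. \<forall>w v. norm (G w z - G v z) \<le> M * norm (w - v)"
    and \<gamma>_pos: "\<gamma> > 0" and \<alpha>_range: "1/2 \<le> \<alpha>" "\<alpha> \<le> 1" and c_pos: "c > 0"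
    and stat_acc: "\<forall>S. S \<subseteq> {..<N} \<and> S \<noteq> {} \<longrightarrow>
        (\<integral>\<^sup>+\<omega>. (SUP w. ennreal \<bar>pop_loss P f w - emp_loss f X S w \<omega>\<bar>) \<partial>Q)
          \<le> ennreal (Vstat \<gamma> \<alpha> (card S))"
    and wstar_min: "\<forall>w. pop_loss P f wstar \<le> pop_loss P f w"
  shows
    "(\<forall>(m::nat) Sm Sn (wm :: 'o \<Rightarrow> 'a) wms wns (s::nat).
        1 \<le> m \<and> Sm \<subseteq> Sn \<and> Sn \<subseteq> {..<N} \<and> card Sm = m \<and> card Sn = 2 * m
        \<and> wm \<in> borel_measurable Q
        \<and> (\<forall>\<omega>\<in>space Q. \<forall>w. reg_risk f X c \<gamma> \<alpha> Sm (wms \<omega>) \<omega> \<le> reg_risk f X c \<gamma> \<alpha> Sm w \<omega>)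
        \<and> (\<forall>\<omega>\<in>space Q. \<forall>w. reg_risk f X c \<gamma> \<alpha> Sn (wns \<omega>) \<omega> \<le> reg_risk f X c \<gamma> \<alpha> Sn w \<omega>)
        \<and> (\<integral>\<^sup>+\<omega>. ennreal (reg_risk f X c \<gamma> \<alpha> Sm (wm \<omega>) \<omega> - reg_risk f X c \<gamma> \<alpha> Sm (wms \<omega>) \<omega>) \<partial>Q)
            \<le> ennreal (Vstat \<gamma> \<alpha> m)
        \<and> real s \<ge> iter_bound \<alpha> c \<gamma> M wstar (2 * m)
        \<longrightarrow>
        (\<integral>\<^sup>+\<omega>. ennreal (reg_risk f X c \<gamma> \<alpha> Sn
                 (fst (agd (\<lambda>y. reg_grad G X c \<gamma> \<alpha> Sn y \<omega>)
                           (agd_eta c \<gamma> \<alpha> M (2 * m)) (agd_beta c \<gamma> \<alpha> M (2 * m)) (wm \<omega>) s)) \<omega>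
               - reg_risk f X c \<gamma> \<alpha> Sn (wns \<omega>) \<omega>) \<partial>Q)
          \<le> ennreal (Vstat \<gamma> \<alpha> (2 * m)))
     \<and>
     (\<forall>(m0::nat) (q::nat). 1 \<le> m0 \<and> N = 2 ^ q * m0 \<longrightarrow>
        (\<Sum>j\<le>q. real (2 ^ j * m0) * iter_bound \<alpha> c \<gamma> M wstar (2 ^ j * m0))
          \<le> real N * (1 + log 2 (real N / real m0)
                + sqrt (2 powr \<alpha>) / (sqrt (2 powr \<alpha>) - 1) * sqrt (real N powr \<alpha> * M / (c * \<gamma>)))
            * log_factor \<alpha> c wstar)"
proof (rule conjI)
  show "\<forall>(m::nat) Sm Sn (wm :: 'o \<Rightarrow> 'a) wms wns (s::nat).
        1 \<le> m \<and> Sm \<subseteq> Sn \<and> Sn \<subseteq> {..<N} \<and> card Sm = m \<and> card Sn = 2 * m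
        \<and> wm \<in> borel_measurable Q
        \<and> (\<forall>\<omega>\<in>space Q. \<forall>w. reg_risk f X c \<gamma> \<alpha> Sm (wms \<omega>) \<omega> \<le> reg_risk f X c \<gamma> \<alpha> Sm w \<omega>)
        \<and> (\<forall>\<omega>\<in>space Q. \<forall>w. reg_risk f X c \<gamma> \<alpha> Sn (wns \<omega>) \<omega> \<le> reg_risk f X c \<gamma> \<alpha> Sn w \<omega>)
        \<and> (\<integral>\<^sup>+\<omega>. ennreal (reg_risk f X c \<gamma> \<alpha> Sm (wm \<omega>) \<omega> - reg_risk f X c \<gamma> \<alpha> Sm (wms \<omega>) \<omega>) \<partial>Q)
            \<le> ennreal (Vstat \<gamma> \<alpha> m)
        \<and> real s \<ge> iter_bound \<alpha> c \<gamma> M wstar (2 * m)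
        \<longrightarrow>
        (\<integral>\<^sup>+\<omega>. ennreal (reg_risk f X c \<gamma> \<alpha> Sn
                 (fst (agd (\<lambda>y. reg_grad G X c \<gamma> \<alpha> Sn y \<omega>)
                           (agd_eta c \<gamma> \<alpha> M (2 * m)) (agd_beta c \<gamma> \<alpha> M (2 * m)) (wm \<omega>) s)) \<omega>
               - reg_risk f X c \<gamma> \<alpha> Sn (wns \<omega>) \<omega>) \<partial>Q)
          \<le> ennreal (Vstat \<gamma> \<alpha> (2 * m))"
    apply (intro allI impI)
    apply (elim conjE)
    apply (rule part_i[OF Q P X_meas f_meas f_convex f_grad M_pos G_lip \<gamma>_pos \<alpha>_range(1) c_pos stat_acc wstar_min])
              apply assumption+
    done
next
  show "\<forall>(m0::nat) (q::nat). 1 \<le> m0 \<and> N = 2 ^ q * m0 \<longrightarrow>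
        (\<Sum>j\<le>q. real (2 ^ j * m0) * iter_bound \<alpha> c \<gamma> M wstar (2 ^ j * m0))
          \<le> real N * (1 + log 2 (real N / real m0)
                + sqrt (2 powr \<alpha>) / (sqrt (2 powr \<alpha>) - 1) * sqrt (real N powr \<alpha> * M / (c * \<gamma>)))
            * log_factor \<alpha> c wstar"
    apply (intro allI impI)
    apply (elim conjE)
    apply (rule part_ii[OF M_pos \<gamma>_pos c_pos \<alpha>_range(1)])
     apply assumption+
    done
qed

end
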